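(* Let $\Pi$ be any one of the six sets \[\{[\overline{123}],[\overline{132}]\},\ \{[\overline{123}],[\overline{213}]\},\ \{[\overline{321}],[\overline{231}]\},\ \{[\overline{321}],[\overline{312}]\},\ \{[\overline{132}],[\overline{231}]\},\ \{[\overline{213}],[\overline{312}]\}.\] Then $\left|\mathrm{Av}_n[\Pi]\right|=1$ for $n\le 2$ and $\left|\mathrm{Av}_n[\Pi]\right|=0$ for $n\ge 3$.
   Context: For $\sigma\in S_n$, the cyclic permutation $[\sigma]$ is the set of all rotations of $\sigma$; $[S_n]$ is the set of cyclic permutations of length $n$. A vincular pattern is a permutation $\pi\in S_k$ with some pairs of adjacent positions joined by an overline (vinculum); a linear permutation $\tau$ contains it if $\tau$ has a subsequence order-isomorphic to $\pi$ whose entries corresponding to positions joined by a vinculum are adjacent in $\tau$. A cyclic permutation $[\sigma]$ contains $[\pi]$ if some rotation of $\sigma$ contains $\pi$. A fully overlined pattern such as $[\overline{123}]$ thus requires three cyclically consecutive entries in the given relative order. $\mathrm{Av}_n[\Pi]$ is the set of $[\sigma]\in[S_n]$ avoiding every pattern in $\Pi$. *)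

theory Defs
  imports Main
begin

definition perms :: "nat \<Rightarrow> nat list set" where
  "perms n = {xs. distinct xs \<and> set xs = {1..n}}"

text \<open>The cyclic permutation [sigma]: the set of all rotations of sigma.\<close>
definition cyc :: "nat list \<Rightarrow> nat list set" where
  "cyc \<sigma> = {rotate k \<sigma> | k. k < length \<sigma>} \<union> {\<sigma>}"

definition cyc_perms :: "nat \<Rightarrow> nat list set set" where
  "cyc_perms n = cyc ` perms n"

text \<open>A vincular pattern: a permutation pi (as a list) together with the set V
  of positions i such that positions i and i+1 are joined by a vinculum.\<close>
type_synonym vpat = "nat list \<times> nat set"

definition contains :: "nat list \<Rightarrow> vpat \<Rightarrow> bool" where
  "contains \<tau> p = (let \<pi> = fst p; V = snd p; k = length \<pi> in
     \<exists>f :: nat \<Rightarrow> nat.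
        (\<forall>i<k. f i < length \<tau>) \<and>
        (\<forall>i j. i < j \<and> j < k \<longrightarrow> f i < f j) \<and>
        (\<forall>i<k. \<forall>j<k. (\<tau> ! f i < \<tau> ! f j) = (\<pi> ! i < \<pi> ! j)) \<and>
        (\<forall>i\<in>V. i + 1 < k \<longrightarrow> f (i + 1) = f i + 1))"

definition ovl :: "nat list \<Rightarrow> vpat" where
  "ovl \<pi> = (\<pi>, {i. i + 1 < length \<pi>})"

definition cyc_contains :: "nat list set \<Rightarrow> vpat \<Rightarrow> bool" where
  "cyc_contains C p = (\<exists>\<sigma>\<in>C. contains \<sigma> p)"

definition Av :: "nat \<Rightarrow> vpat set \<Rightarrow> nat list set set" where
  "Av n \<Pi> = {C \<in> cyc_perms n. \<forall>p\<in>\<Pi>. \<not> cyc_contains C p}"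

end

theory Submission
  imports Defs
begin

lemma all3: "(\<forall>i<(3::nat). P i) = (P 0 \<and> P 1 \<and> P 2)"
proof -
  have "{i. i < (3::nat)} = {0,1,2}" by auto
  then show ?thesis by (metis (mono_tags, lifting) empty_iff insert_iff mem_Collect_eq)
qed

lemma all3S: "(\<forall>i<Suc (Suc (Suc 0)). P i) = (P 0 \<and> P (Suc 0) \<and> P (Suc (Suc 0)))"
  by (auto simp: less_Suc_eq)

lemma short_not_contains:
  assumes "length \<tau> < 3"
  shows "\<not> contains \<tau> (ovl [a,b,c])"
proof
  assume "contains \<tau> (ovl [a,b,c])"
  then obtain f where f1: "\<forall>i<(3::nat). f i < length \<tau>" and f2: "\<forall>i j. i < j \<and> j < 3 \<longrightarrow> f i < f j"
    unfolding contains_def ovl_def Let_def by (auto simp: numeral_3_eq_3)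
  have "f 0 < f 1" "f 1 < f 2" "f 2 < length \<tau>" using f1 f2 by auto
  then show False using assms by linarith
qed

lemma triple_contains:
  assumes "length \<tau> \<ge> 3"
    and "(\<tau>!0 < \<tau>!1) = (x < y)" "(\<tau>!0 < \<tau>!2) = (x < z)" "(\<tau>!1 < \<tau>!2) = (y < z)"
    and "(\<tau>!1 < \<tau>!0) = (y < x)" "(\<tau>!2 < \<tau>!0) = (z < x)" "(\<tau>!2 < \<tau>!1) = (z < y)"
  shows "contains \<tau> (ovl [x,y,z])"
  unfolding contains_def ovl_def Let_def
  apply (rule exI[of _ id])
  using assms by (simp add: all3S numeral_3_eq_3 numeral_2_eq_2)

lemma rot_triple:
  assumes "\<sigma> \<in> perms n" "n \<ge> 3" "j < n"
  shows "\<exists>\<tau>\<in>cyc \<sigma>. length \<tau> = n \<and> \<tau>!0 = \<sigma>!j \<and> \<tau>!1 = \<sigma>!((j+1) mod n) \<and> \<tau>!2 = \<sigma>!((j+2) mod n)"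
proof -
  have len: "length \<sigma> = n" using assms(1) unfolding perms_def
    by (metis (mono_tags, lifting) card_atLeastAtMost diff_Suc_1 distinct_card mem_Collect_eq)
  show ?thesis
    apply (rule bexI[of _ "rotate j \<sigma>"])
    using assms len by (auto simp: nth_rotate cyc_def add.commute)
qed

lemma perm_facts:
  assumes "\<sigma> \<in> perms n"
  shows "length \<sigma> = n" "distinct \<sigma>" "\<And>i. i < n \<Longrightarrow> 1 \<le> \<sigma>!i \<and> \<sigma>!i \<le> n"
    "n \<ge> 1 \<Longrightarrow> \<exists>p<n. \<sigma>!p = 1" "n \<ge> 1 \<Longrightarrow> \<exists>p<n. \<sigma>!p = n"
proof -
  show len: "length \<sigma> = n" using assms unfolding perms_def
    by (metis (mono_tags, lifting) card_atLeastAtMost diff_Suc_1 distinct_card mem_Collect_eq)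
  show "distinct \<sigma>" using assms unfolding perms_def by auto
  have s: "set \<sigma> = {1..n}" using assms unfolding perms_def by auto
  show "\<And>i. i < n \<Longrightarrow> 1 \<le> \<sigma>!i \<and> \<sigma>!i \<le> n"
    using s len nth_mem by (metis atLeastAtMost_iff)
  show "n \<ge> 1 \<Longrightarrow> \<exists>p<n. \<sigma>!p = 1" using s len
    by (metis atLeastAtMost_iff in_set_conv_nth order_refl)
  show "n \<ge> 1 \<Longrightarrow> \<exists>p<n. \<sigma>!p = n" using s len
    by (metis atLeastAtMost_iff in_set_conv_nth order_refl)
qed

lemma cyc_window:
  assumes "\<sigma> \<in> perms n" "n \<ge> 3" "p < n" "q < 3"
  shows "\<exists>\<tau>\<in>cyc \<sigma>. length \<tau> = n \<and> \<tau>!q = \<sigma>!p \<and> \<tau>!0 \<noteq> \<tau>!1 \<and> \<tau>!0 \<noteq> \<tau>!2 \<and> \<tau>!1 \<noteq> \<tau>!2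
     \<and> (\<forall>i<3. 1 \<le> \<tau>!i \<and> \<tau>!i \<le> n)"
proof -
  define j where "j = (p + n - q) mod n"
  have jn: "j < n" using assms unfolding j_def by simp
  obtain \<tau> where t: "\<tau> \<in> cyc \<sigma>" "length \<tau> = n" "\<tau>!0 = \<sigma>!j" "\<tau>!1 = \<sigma>!((j+1) mod n)"
    "\<tau>!2 = \<sigma>!((j+2) mod n)"
    using rot_triple[OF assms(1,2) jn] by blast
  have L: "length \<sigma> = n" "distinct \<sigma>" and B: "\<And>i. i < n \<Longrightarrow> 1 \<le> \<sigma>!i \<and> \<sigma>!i \<le> n"
    using perm_facts[OF assms(1)] by auto
  have i1: "(j+1) mod n < n" "(j+2) mod n < n" using assms by auto
  have d1: "j \<noteq> (j+1) mod n" "j \<noteq> (j+2) mod n" "(j+1) mod n \<noteq> (j+2) mod n"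
    using jn assms(2) by (auto simp: mod_if split: if_splits)
  have ne: "\<tau>!0 \<noteq> \<tau>!1" "\<tau>!0 \<noteq> \<tau>!2" "\<tau>!1 \<noteq> \<tau>!2"
    using t d1 L jn i1 by (auto simp: nth_eq_iff_index_eq)
  have bd: "\<forall>i<3. 1 \<le> \<tau>!i \<and> \<tau>!i \<le> n"
    unfolding all3 using t B jn i1 by auto
  have q: "\<tau>!q = \<sigma>!p"
  proof -
    have "q = 0 \<or> q = 1 \<or> q = 2" using assms by auto
    then show ?thesis
    proof (elim disjE)
      assume "q = 0" then show ?thesis using t assms unfolding j_def by simp
    next
      assume "q = 1"
      have e1: "(j+1) mod n = ((p+n-1) + 1) mod n" unfolding j_def \<open>q = 1\<close> by (metis mod_add_left_eq)
      have e2: "(p+n-1) + 1 = p + n" using assms by arith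
      have "(j+1) mod n = p" using e1 e2 assms by simp
      then show ?thesis using t \<open>q = 1\<close> by simp
    next
      assume "q = 2"
      have e1: "(j+2) mod n = ((p+n-2) + 2) mod n" unfolding j_def \<open>q = 2\<close> by (metis mod_add_left_eq)
      have e2: "(p+n-2) + 2 = p + n" using assms by arith
      have "(j+2) mod n = p" using e1 e2 assms by simp
      then show ?thesis using t \<open>q = 2\<close> by simp
    qed
  qed
  show ?thesis using t ne bd q by blast
qed


lemma win_ext:
  assumes "\<sigma> \<in> perms n" "n \<ge> 3" "q < 3" "v = 1 \<or> v = n"
  shows "\<exists>\<tau>\<in>cyc \<sigma>. length \<tau> = n \<and> \<tau>!q = v \<and> \<tau>!0 \<noteq> \<tau>!1 \<and> \<tau>!0 \<noteq> \<tau>!2 \<and> \<tau>!1 \<noteq> \<tau>!2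
     \<and> 1 \<le> \<tau>!0 \<and> \<tau>!0 \<le> n \<and> 1 \<le> \<tau>!1 \<and> \<tau>!1 \<le> n \<and> 1 \<le> \<tau>!2 \<and> \<tau>!2 \<le> n"
proof -
  obtain p where "p < n" "\<sigma>!p = v" using perm_facts(4,5)[OF assms(1)] assms(2,4) by force
  then show ?thesis using cyc_window[OF assms(1,2) \<open>p < n\<close> assms(3)] unfolding all3 by auto
qed

lemma case0:
  assumes "\<sigma> \<in> perms n" "n \<ge> 3"
  shows "\<exists>P\<in>{ovl [1,2,3], ovl [1,3,2]}. cyc_contains (cyc \<sigma>) P"
proof -
  obtain \<tau> where t: "\<tau>\<in>cyc \<sigma>" "length \<tau> = n" "\<tau>!0 = 1" "\<tau>!0 \<noteq> \<tau>!1" "\<tau>!0 \<noteq> \<tau>!2" "\<tau>!1 \<noteq> \<tau>!2"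
     "1 \<le> \<tau>!1" "1 \<le> \<tau>!2" using win_ext[OF assms(1,2), of 0 1] by auto
  show ?thesis
  proof (cases "\<tau>!1 < \<tau>!2")
    case True
    then have "contains \<tau> (ovl [1,2,3])" using t assms(2) by (intro triple_contains) auto
    then show ?thesis using t unfolding cyc_contains_def by blast
  next
    case False
    then have "contains \<tau> (ovl [1,3,2])" using t assms(2) by (intro triple_contains) auto
    then show ?thesis using t unfolding cyc_contains_def by blast
  qed
qed

lemma case1:
  assumes "\<sigma> \<in> perms n" "n \<ge> 3"
  shows "\<exists>P\<in>{ovl [1,2,3], ovl [2,1,3]}. cyc_contains (cyc \<sigma>) P"
proof -
  obtain \<tau> where t: "\<tau>\<in>cyc \<sigma>" "length \<tau> = n" "\<tau>!2 = n" "\<tau>!0 \<noteq> \<tau>!1" "\<tau>!0 \<noteq> \<tau>!2" "\<tau>!1 \<noteq> \<tau>!2"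
     "\<tau>!0 \<le> n" "\<tau>!1 \<le> n" using win_ext[OF assms(1,2), of 2 n] by auto
  show ?thesis
  proof (cases "\<tau>!0 < \<tau>!1")
    case True
    then have "contains \<tau> (ovl [1,2,3])" using t assms(2) by (intro triple_contains) auto
    then show ?thesis using t unfolding cyc_contains_def by blast
  next
    case False
    then have "contains \<tau> (ovl [2,1,3])" using t assms(2) by (intro triple_contains) auto
    then show ?thesis using t unfolding cyc_contains_def by blast
  qed
qed

lemma case2:
  assumes "\<sigma> \<in> perms n" "n \<ge> 3"
  shows "\<exists>P\<in>{ovl [3,2,1], ovl [2,3,1]}. cyc_contains (cyc \<sigma>) P"
proof -
  obtain \<tau> where t: "\<tau>\<in>cyc \<sigma>" "length \<tau> = n" "\<tau>!2 = 1" "\<tau>!0 \<noteq> \<tau>!1" "\<tau>!0 \<noteq> \<tau>!2" "\<tau>!1 \<noteq> \<tau>!2"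
     "1 \<le> \<tau>!0" "1 \<le> \<tau>!1" using win_ext[OF assms(1,2), of 2 1] by auto
  show ?thesis
  proof (cases "\<tau>!0 < \<tau>!1")
    case True
    then have "contains \<tau> (ovl [2,3,1])" using t assms(2) by (intro triple_contains) auto
    then show ?thesis using t unfolding cyc_contains_def by blast
  next
    case False
    then have "contains \<tau> (ovl [3,2,1])" using t assms(2) by (intro triple_contains) auto
    then show ?thesis using t unfolding cyc_contains_def by blast
  qed
qed

lemma case3:
  assumes "\<sigma> \<in> perms n" "n \<ge> 3"
  shows "\<exists>P\<in>{ovl [3,2,1], ovl [3,1,2]}. cyc_contains (cyc \<sigma>) P"
proof -
  obtain \<tau> where t: "\<tau>\<in>cyc \<sigma>" "length \<tau> = n" "\<tau>!0 = n" "\<tau>!0 \<noteq> \<tau>!1" "\<tau>!0 \<noteq> \<tau>!2" "\<tau>!1 \<noteq> \<tau>!2"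
     "\<tau>!1 \<le> n" "\<tau>!2 \<le> n" using win_ext[OF assms(1,2), of 0 n] by auto
  show ?thesis
  proof (cases "\<tau>!1 < \<tau>!2")
    case True
    then have "contains \<tau> (ovl [3,1,2])" using t assms(2) by (intro triple_contains) auto
    then show ?thesis using t unfolding cyc_contains_def by blast
  next
    case False
    then have "contains \<tau> (ovl [3,2,1])" using t assms(2) by (intro triple_contains) auto
    then show ?thesis using t unfolding cyc_contains_def by blast
  qed
qed

lemma case4:
  assumes "\<sigma> \<in> perms n" "n \<ge> 3"
  shows "\<exists>P\<in>{ovl [1,3,2], ovl [2,3,1]}. cyc_contains (cyc \<sigma>) P"
proof -
  obtain \<tau> where t: "\<tau>\<in>cyc \<sigma>" "length \<tau> = n" "\<tau>!1 = n" "\<tau>!0 \<noteq> \<tau>!1" "\<tau>!0 \<noteq> \<tau>!2" "\<tau>!1 \<noteq> \<tau>!2"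
     "\<tau>!0 \<le> n" "\<tau>!2 \<le> n" using win_ext[OF assms(1,2), of 1 n] by auto
  show ?thesis
  proof (cases "\<tau>!0 < \<tau>!2")
    case True
    then have "contains \<tau> (ovl [1,3,2])" using t assms(2) by (intro triple_contains) auto
    then show ?thesis using t unfolding cyc_contains_def by blast
  next
    case False
    then have "contains \<tau> (ovl [2,3,1])" using t assms(2) by (intro triple_contains) auto
    then show ?thesis using t unfolding cyc_contains_def by blast
  qed
qed

lemma case5:
  assumes "\<sigma> \<in> perms n" "n \<ge> 3"
  shows "\<exists>P\<in>{ovl [2,1,3], ovl [3,1,2]}. cyc_contains (cyc \<sigma>) P"
proof -
  obtain \<tau> where t: "\<tau>\<in>cyc \<sigma>" "length \<tau> = n" "\<tau>!1 = 1" "\<tau>!0 \<noteq> \<tau>!1" "\<tau>!0 \<noteq> \<tau>!2" "\<tau>!1 \<noteq> \<tau>!2"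
     "1 \<le> \<tau>!0" "1 \<le> \<tau>!2" using win_ext[OF assms(1,2), of 1 1] by auto
  show ?thesis
  proof (cases "\<tau>!0 < \<tau>!2")
    case True
    then have "contains \<tau> (ovl [2,1,3])" using t assms(2) by (intro triple_contains) auto
    then show ?thesis using t unfolding cyc_contains_def by blast
  next
    case False
    then have "contains \<tau> (ovl [3,1,2])" using t assms(2) by (intro triple_contains) auto
    then show ?thesis using t unfolding cyc_contains_def by blast
  qed
qed

lemma every_contains:
  assumes "\<sigma> \<in> perms n" "n \<ge> 3"
    and "\<Pi> \<in> {{ovl [1,2,3], ovl [1,3,2]}, {ovl [1,2,3], ovl [2,1,3]},
                 {ovl [3,2,1], ovl [2,3,1]}, {ovl [3,2,1], ovl [3,1,2]},
                 {ovl [1,3,2], ovl [2,3,1]}, {ovl [2,1,3], ovl [3,1,2]}}"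
  shows "\<exists>P\<in>\<Pi>. cyc_contains (cyc \<sigma>) P"
proof -
  have "\<Pi> = {ovl [1,2,3], ovl [1,3,2]} \<or> \<Pi> = {ovl [1,2,3], ovl [2,1,3]} \<or>
        \<Pi> = {ovl [3,2,1], ovl [2,3,1]} \<or> \<Pi> = {ovl [3,2,1], ovl [3,1,2]} \<or>
        \<Pi> = {ovl [1,3,2], ovl [2,3,1]} \<or> \<Pi> = {ovl [2,1,3], ovl [3,1,2]}"
    using assms(3) by (simp only: insert_iff empty_iff simp_thms)
  then show ?thesis
    using case0[OF assms(1,2)] case1[OF assms(1,2)] case2[OF assms(1,2)]
      case3[OF assms(1,2)] case4[OF assms(1,2)] case5[OF assms(1,2)]
    by (elim disjE) (erule ssubst, assumption)+
qed

lemma cyc_len: "\<tau> \<in> cyc \<sigma> \<Longrightarrow> length \<tau> = length \<sigma>"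
  unfolding cyc_def by auto

lemma perms0: "perms 0 = {[]}" unfolding perms_def by auto

lemma perms1: "perms 1 = {[1]}"
proof -
  have "xs = [1]" if "distinct xs" "set xs = {1..1::nat}" for xs
  proof -
    have "length xs = card (set xs)" using that(1) by (simp add: distinct_card)
    then have "length xs = 1" using that(2) by simp
    then obtain a where "xs = [a]" by (metis One_nat_def length_0_conv length_Suc_conv)
    then show ?thesis using that by simp
  qed
  then show ?thesis unfolding perms_def by auto
qed

lemma perms2: "perms 2 = {[1,2],[2,1]}"
proof -
  have e: "{1..2::nat} = {1,2}" by auto
  have "xs = [1,2] \<or> xs = [2,1]" if "distinct xs" "set xs = {1..2::nat}" for xs
  proof -
    have "length xs = card (set xs)" using that(1) by (simp add: distinct_card)
    then have "length xs = 2" using that(2) by simp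
    then obtain a b where ab: "xs = [a,b]"
      by (metis One_nat_def length_0_conv length_Suc_conv numeral_2_eq_2)
    have "{a,b} = {1,2::nat}" using that(2) ab e by simp
    then show ?thesis using ab by (simp add: doubleton_eq_iff)
  qed
  moreover have "[1,2] \<in> perms 2" "[2,1] \<in> perms 2" unfolding perms_def using e by auto
  ultimately show ?thesis unfolding perms_def by blast
qed

lemma ex2: "(\<exists>k. P k \<and> k < (2::nat)) = (P 0 \<or> P 1)"
proof
  assume "\<exists>k. P k \<and> k < (2::nat)"
  then obtain k where "P k" "k < (2::nat)" by blast
  then have "k = 0 \<or> k = 1" by auto
  then show "P 0 \<or> P 1" using \<open>P k\<close> by auto
next
  assume "P 0 \<or> P 1"
  then show "\<exists>k. P k \<and> k < (2::nat)" by auto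
qed

lemma cycab: "cyc [a,b::nat] = {[a,b],[b,a]}"
proof -
  have "{rotate k [a,b] | k. k < length [a,b]} = {x. \<exists>k. x = rotate k [a,b] \<and> k < 2}"
    by (simp add: numeral_2_eq_2)
  also have "\<dots> = {x. x = rotate 0 [a,b] \<or> x = rotate 1 [a,b]}"
    by (simp only: ex2)
  also have "\<dots> = {[a,b],[b,a]}" by auto
  finally show ?thesis unfolding cyc_def by auto
qed

lemma cyc2: "cyc [2,1] = cyc [1,2::nat]"
  by (simp add: cycab insert_commute)

lemma perms_small: "n \<le> 2 \<Longrightarrow> card (cyc_perms n) = 1"
proof -
  assume "n \<le> 2"
  then have "n = 0 \<or> n = 1 \<or> n = 2" by auto
  then show ?thesis
  proof (elim disjE)
    assume "n = 0" then show ?thesis unfolding cyc_perms_def by (simp add: perms0)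
  next
    assume "n = 1" then show ?thesis unfolding cyc_perms_def using perms1 by simp
  next
    assume "n = 2"
    have "cyc ` perms 2 = {cyc [1,2]}" unfolding perms2 using cyc2 by simp
    then show ?thesis unfolding cyc_perms_def \<open>n = 2\<close> by simp
  qed
qed

theorem proposition4p1:
  fixes \<Pi> :: "vpat set" and n :: nat
  assumes "\<Pi> \<in> {{ovl [1,2,3], ovl [1,3,2]}, {ovl [1,2,3], ovl [2,1,3]},
                 {ovl [3,2,1], ovl [2,3,1]}, {ovl [3,2,1], ovl [3,1,2]},
                 {ovl [1,3,2], ovl [2,3,1]}, {ovl [2,1,3], ovl [3,1,2]}}"
  shows "(n \<le> 2 \<longrightarrow> card (Av n \<Pi>) = 1) \<and> (n \<ge> 3 \<longrightarrow> card (Av n \<Pi>) = 0)"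
proof (intro conjI impI)
  assume n: "n \<le> 2"
  have P3: "\<forall>P\<in>\<Pi>. \<exists>a b c. P = ovl [a,b,c]" using assms by auto
  have "Av n \<Pi> = cyc_perms n"
  proof -
    have "\<not> cyc_contains C P" if hC: "C \<in> cyc_perms n" and hP: "P \<in> \<Pi>" for C P
    proof -
      obtain \<sigma> where s: "\<sigma> \<in> perms n" "C = cyc \<sigma>" using hC unfolding cyc_perms_def by blast
      have "length \<sigma> = n" using perm_facts(1)[OF s(1)] .
      then have "\<forall>\<tau>\<in>C. length \<tau> < 3" using s n cyc_len by fastforce
      then show ?thesis using P3 hP short_not_contains unfolding cyc_contains_def by metis
    qed
    then show ?thesis unfolding Av_def by auto
  qed
  then show "card (Av n \<Pi>) = 1" using perms_small[OF n] by simp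
next
  assume n: "n \<ge> 3"
  have "Av n \<Pi> = {}"
    using every_contains[OF _ n assms] unfolding Av_def cyc_perms_def by auto
  then show "card (Av n \<Pi>) = 0" by simp
qed

end
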